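(* For every $\alpha\in[0,1]$ there exist $N_0$ and a family of connected bipartite graphs $(G_N)_{N\ge N_0}$ with $|V(G_N)|=N$ and $\hat r_\infty(G_N)\to\alpha$ as $N\to\infty$. More precisely: (i) if $\alpha\in(0,1]$, the family can be chosen so that $|E(G_N)|=N+O_\alpha(1)$, $\Delta(G_N)=\alpha N+O_\alpha(1)$, and $\hat r_\infty(G_N)=\alpha+O_\alpha(N^{-1/2})$; (ii) if $\alpha=0$, the family can be chosen so that $|E(G_N)|\le 2N$, $\Delta(G_N)\le 2\sqrt N+2$, and $\hat r_\infty(G_N)=O(N^{-1/2})$.
   Context: All graphs are finite and simple; a graph is nonempty if it has at least one edge. $\Delta$ is maximum degree, $tK_2$ is a matching with $t$ edges. For graphs $F,G,H$, $F\to(G,H)$ means every red--blue coloring of $E(F)$ contains a red copy of $G$ or a blue copy of $H$, and $\hat r(G,H)=\min\{|E(F)|:F\to(G,H)\}$. For a nonempty graph $G$, $\hat r_\infty(G)=\lim_{t\to\infty}\frac{\hat r(tK_2,G)}{t\,|E(G)|}$ (this limit exists). $O_\alpha(\cdot)$ denotes a bound with implied constant depending only on $\alpha$. *)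

theory Defs
  imports Complex_Main
begin

text \<open>Finite simple graphs with vertices in nat (every finite graph is isomorphic to one of these).
  A graph is a pair (V, E) with E a set of 2-element subsets of V.\<close>

type_synonym graph = "nat set \<times> nat set set"

definition verts :: "graph \<Rightarrow> nat set" where "verts G = fst G"
definition edges :: "graph \<Rightarrow> nat set set" where "edges G = snd G"

definition wf_graph :: "graph \<Rightarrow> bool" where
  "wf_graph G \<longleftrightarrow> finite (verts G) \<and>
     (\<forall>e\<in>edges G. \<exists>u v. u \<noteq> v \<and> u \<in> verts G \<and> v \<in> verts G \<and> e = {u, v})"

definition has_copy :: "graph \<Rightarrow> graph \<Rightarrow> bool" where
  "has_copy H F \<longleftrightarrow> (\<exists>f. inj_on f (verts H) \<and> f ` verts H \<subseteq> verts F \<and>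
      (\<forall>e\<in>edges H. f ` e \<in> edges F))"

definition arrows :: "graph \<Rightarrow> graph \<Rightarrow> graph \<Rightarrow> bool" where
  "arrows F G H \<longleftrightarrow> (\<forall>R \<subseteq> edges F.
      has_copy G (verts F, R) \<or> has_copy H (verts F, edges F - R))"

definition size_ramsey :: "graph \<Rightarrow> graph \<Rightarrow> nat" where
  "size_ramsey G H = (LEAST m. \<exists>F. wf_graph F \<and> arrows F G H \<and> card (edges F) = m)"

definition matching :: "nat \<Rightarrow> graph" where
  "matching t = ({..<2*t}, {{2*i, 2*i+1} | i. i < t})"

definition r_inf :: "graph \<Rightarrow> real" where
  "r_inf G = lim (\<lambda>t. real (size_ramsey (matching t) G) / (real t * real (card (edges G))))"

definition connected_graph :: "graph \<Rightarrow> bool" where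
  "connected_graph G \<longleftrightarrow> verts G \<noteq> {} \<and>
     (\<forall>u\<in>verts G. \<forall>v\<in>verts G. (\<lambda>x y. {x, y} \<in> edges G)\<^sup>*\<^sup>* u v)"

definition bipartite :: "graph \<Rightarrow> bool" where
  "bipartite G \<longleftrightarrow> (\<exists>A \<subseteq> verts G. \<forall>e\<in>edges G. card (e \<inter> A) = 1)"

definition degree :: "graph \<Rightarrow> nat \<Rightarrow> nat" where
  "degree G v = card {e \<in> edges G. v \<in> e}"

definition max_degree :: "graph \<Rightarrow> nat" where
  "max_degree G = Max (degree G ` verts G)"

end

theory Submission
  imports Defs "HOL-Library.Nat_Bijection" "HOL-Real_Asymp.Real_Asymp"
begin

lemma subadd_mult:
  fixes a :: "nat \<Rightarrow> real"
  assumes sub: "\<And>m n. a (m + n) \<le> a m + a n"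
  shows "a (q * k + r) \<le> real q * a k + a r"
proof (induction q)
  case 0 then show ?case by simp
next
  case (Suc q)
  have "a (Suc q * k + r) = a (k + (q * k + r))" by (simp add: algebra_simps)
  also have "\<dots> \<le> a k + a (q * k + r)" by (rule sub)
  also have "\<dots> \<le> a k + (real q * a k + a r)" using Suc by simp
  finally show ?case by (simp add: algebra_simps)
qed

lemma fekete:
  fixes a :: "nat \<Rightarrow> real"
  assumes sub: "\<And>m n. a (m + n) \<le> a m + a n"
    and nn: "\<And>n. a n \<ge> 0"
  shows "(\<lambda>n. a n / real n) \<longlonglongrightarrow> (INF n\<in>{1..}. a n / real n)"
proof -
  define L where "L = (INF n\<in>{1..}. a n / real n)"
  have bdd: "bdd_below ((\<lambda>n. a n / real n) ` {1..})"
    by (rule bdd_belowI[where m=0]) (auto intro: divide_nonneg_nonneg nn)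
  have lowb: "L \<le> a n / real n" if "n \<ge> 1" for n
    unfolding L_def using that bdd by (intro cINF_lower) auto
  show ?thesis unfolding L_def[symmetric]
  proof (rule order_tendstoI)
    fix y assume "y < L"
    show "\<forall>\<^sub>F n in sequentially. y < a n / real n"
    proof (rule eventually_sequentiallyI[of 1])
      fix n :: nat assume "1 \<le> n" then show "y < a n / real n" using lowb[of n] \<open>y < L\<close> by linarith
    qed
  next
    fix y assume "L < y"
    then obtain k where k1: "k \<ge> 1" and kl: "a k / real k < (L + y) / 2"
    proof -
      have "\<exists>x\<in>(\<lambda>n. a n / real n) ` {1..}. x < (L + y) / 2"
        unfolding L_def using \<open>L < y\<close>
        using bdd by (intro cINF_less_iff[THEN iffD1]) (auto simp: L_def)
      then show ?thesis using that by auto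
    qed
    define M where "M = (\<Sum>r<k. a r)"
    have Mr: "a r \<le> M" if "r < k" for r
      unfolding M_def using that nn
      by (intro member_le_sum) auto
    have M0: "M \<ge> 0" unfolding M_def using nn by (simp add: sum_nonneg)
    define eps where "eps = (y - L) / 2"
    have eps: "eps > 0" using \<open>L < y\<close> by (simp add: eps_def)
    have ev: "\<forall>\<^sub>F n in sequentially. M / real n < eps"
    proof -
      have "(\<lambda>n. M / real n) \<longlonglongrightarrow> 0"
        by (intro tendsto_divide_0[OF tendsto_const] filterlim_at_top_imp_at_infinity filterlim_real_sequentially)
      then show ?thesis using eps by (simp add: order_tendsto_iff)
    qed
    show "\<forall>\<^sub>F n in sequentially. a n / real n < y"
      using ev eventually_ge_at_top[of "1::nat"]
    proof eventually_elim
      case (elim n)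
      define q r where "q = n div k" and "r = n mod k"
      have n: "n = q * k + r" unfolding q_def r_def by simp
      have rk: "r < k" unfolding r_def using k1 by simp
      have "a n \<le> real q * a k + a r" unfolding n by (rule subadd_mult[OF sub])
      also have "\<dots> \<le> real q * a k + M" using Mr[OF rk] by simp
      finally have an: "a n \<le> real q * a k + M" .
      have qk: "real q * real k \<le> real n" unfolding n by simp
      have "real q * a k = (real q * real k) * (a k / real k)" using k1 by simp
      also have "\<dots> \<le> real n * (a k / real k)"
        using qk nn[of k] k1 by (intro mult_right_mono) auto
      finally have "a n \<le> real n * (a k / real k) + M" using an by simp
      then have "a n / real n \<le> a k / real k + M / real n"
        using elim by (simp add: field_simps)
      also have "\<dots> < (L + y) / 2 + eps" using kl elim by (intro add_strict_mono) auto
      also have "\<dots> = y" by (simp add: eps_def field_simps)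
      finally show ?case .
    qed
  qed
qed

lemma wf_edgeD: "wf_graph F \<Longrightarrow> e \<in> edges F \<Longrightarrow> \<exists>u v. u \<noteq> v \<and> u \<in> verts F \<and> v \<in> verts F \<and> e = {u, v}"
  unfolding wf_graph_def by simp

lemma wf_edges_Pow: "wf_graph F \<Longrightarrow> edges F \<subseteq> Pow (verts F)"
proof
  fix e assume "wf_graph F" "e \<in> edges F"
  then obtain u v where "u \<in> verts F" "v \<in> verts F" "e = {u, v}" using wf_edgeD by blast
  then show "e \<in> Pow (verts F)" by simp
qed

lemma wf_edges_finite: "wf_graph F \<Longrightarrow> finite (edges F)"
proof -
  assume w: "wf_graph F"
  then have "edges F \<subseteq> Pow (verts F)" by (rule wf_edges_Pow)
  moreover have "finite (verts F)" using w unfolding wf_graph_def by blast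
  ultimately show ?thesis by (meson finite_Pow_iff rev_finite_subset)
qed

lemma copy_mono:
  assumes "has_copy H (V, E)" "V \<subseteq> V'" "E \<subseteq> E'"
  shows "has_copy H (V', E')"
proof -
  from assms(1) obtain f where f: "inj_on f (verts H)" "f ` verts H \<subseteq> V"
     "\<forall>e\<in>edges H. f ` e \<in> E"
    unfolding has_copy_def by (auto simp: verts_def edges_def)
  then show ?thesis using assms(2,3) unfolding has_copy_def
    by (intro exI[of _ f]) (auto simp: verts_def edges_def)
qed

lemma copy_map:
  assumes "has_copy H (V, E)" "inj_on \<phi> V" "\<phi> ` V \<subseteq> V'" "\<And>e. e \<in> E \<Longrightarrow> \<phi> ` e \<in> E'"
  shows "has_copy H (V', E')"
proof -
  from assms(1) obtain f where f: "inj_on f (verts H)" "f ` verts H \<subseteq> V"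
     "\<forall>e\<in>edges H. f ` e \<in> E"
    unfolding has_copy_def verts_def edges_def by auto
  have "inj_on (\<phi> \<circ> f) (verts H)"
    using f(1,2) assms(2) by (meson comp_inj_on inj_on_subset)
  moreover have "(\<phi> \<circ> f) ` verts H \<subseteq> V'" using f(2) assms(3) by (auto simp: image_comp[symmetric])
  moreover have "\<forall>e\<in>edges H. (\<phi> \<circ> f) ` e \<in> E'"
  proof
    fix e assume "e \<in> edges H"
    then have "f ` e \<in> E" using f(3) by blast
    then have "\<phi> ` (f ` e) \<in> E'" by (rule assms(4))
    then show "(\<phi> \<circ> f) ` e \<in> E'" by (simp add: image_comp)
  qed
  ultimately show ?thesis unfolding has_copy_def verts_def edges_def by (intro exI[of _ "\<phi> \<circ> f"]) auto
qed

lemma matching_verts: "verts (matching t) = {..<2*t}"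
  by (simp add: matching_def verts_def)
lemma matching_edges: "edges (matching t) = {{2*i, 2*i+1} | i. i < t}"
  by (simp add: matching_def edges_def)

lemma copy_matching0: "has_copy (matching 0) F"
  unfolding has_copy_def matching_verts matching_edges by simp

lemma copy_matching_combine:
  assumes "has_copy (matching s) (V1, R)" "has_copy (matching t) (V2, R)" "V1 \<inter> V2 = {}"
  shows "has_copy (matching (s + t)) (V1 \<union> V2, R)"
proof -
  from assms(1) obtain f1 where f10: "inj_on f1 {..<2*s}" "f1 ` {..<2*s} \<subseteq> V1"
     "\<forall>e\<in>edges (matching s). f1 ` e \<in> R"
    unfolding has_copy_def matching_verts by (auto simp: verts_def edges_def)
  have f1: "inj_on f1 {..<2*s}" "f1 ` {..<2*s} \<subseteq> V1" "\<And>i. i < s \<Longrightarrow> f1 ` {2*i, 2*i+1} \<in> R"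
    using f10 unfolding matching_edges by blast+
  from assms(2) obtain f2 where f20: "inj_on f2 {..<2*t}" "f2 ` {..<2*t} \<subseteq> V2"
     "\<forall>e\<in>edges (matching t). f2 ` e \<in> R"
    unfolding has_copy_def matching_verts by (auto simp: verts_def edges_def)
  have f2: "inj_on f2 {..<2*t}" "f2 ` {..<2*t} \<subseteq> V2" "\<And>i. i < t \<Longrightarrow> f2 ` {2*i, 2*i+1} \<in> R"
    using f20 unfolding matching_edges by blast+
  define h where "h x = (if x < 2*s then f1 x else f2 (x - 2*s))" for x
  have "inj_on h {..<2*(s+t)}"
  proof (rule inj_onI)
    fix x y assume x: "x \<in> {..<2*(s+t)}" and y: "y \<in> {..<2*(s+t)}" and e: "h x = h y"
    show "x = y"
    proof (cases "x < 2*s"; cases "y < 2*s")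
      assume "x < 2*s" "y < 2*s" then show ?thesis using e f1(1) by (auto simp: h_def inj_on_def)
    next
      assume a: "x < 2*s" "\<not> y < 2*s"
      then have "f1 x \<in> V1" "f2 (y - 2*s) \<in> V2" using f1(2) f2(2) y by auto
      then show ?thesis using e a assms(3) by (auto simp: h_def)
    next
      assume a: "\<not> x < 2*s" "y < 2*s"
      then have "f2 (x - 2*s) \<in> V2" "f1 y \<in> V1" using f1(2) f2(2) x by auto
      then show ?thesis using e a assms(3) by (auto simp: h_def)
    next
      assume a: "\<not> x < 2*s" "\<not> y < 2*s"
      then have "x - 2*s = y - 2*s" using e f2(1) x y unfolding h_def inj_on_def by auto
      then show ?thesis using a by simp
    qed
  qed
  moreover have "h ` {..<2*(s+t)} \<subseteq> V1 \<union> V2"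
  proof
    fix z assume "z \<in> h ` {..<2*(s+t)}"
    then obtain x where x: "x < 2*(s+t)" "z = h x" by auto
    show "z \<in> V1 \<union> V2"
    proof (cases "x < 2*s")
      case True then show ?thesis using x f1(2) by (auto simp: h_def)
    next
      case False then have "x - 2*s < 2*t" using x by simp
      then show ?thesis using x f2(2) False by (auto simp: h_def)
    qed
  qed
  moreover have "h ` {2*i, 2*i+1} \<in> R" if "i < s + t" for i
  proof (cases "i < s")
    case True
    then have "h ` {2*i, 2*i+1} = f1 ` {2*i, 2*i+1}" by (simp add: h_def)
    then show ?thesis using f1(3) True by simp
  next
    case False
    have "2*i+1 - 2*s = 2*(i-s)+1" "2*i - 2*s = 2*(i-s)" using False by auto
    then have "h ` {2*i, 2*i+1} = f2 ` {2*(i-s), 2*(i-s)+1}"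
      using False by (simp add: h_def)
    then show ?thesis using f2(3) False that by simp
  qed
  ultimately show ?thesis
    unfolding has_copy_def matching_verts matching_edges by (auto simp: verts_def edges_def)
qed

definition ex_arrow :: "nat \<Rightarrow> graph \<Rightarrow> bool" where
  "ex_arrow t G \<longleftrightarrow> (\<exists>F. wf_graph F \<and> arrows F (matching t) G)"

lemma sr_witness:
  assumes "ex_arrow t G"
  obtains F where "wf_graph F" "arrows F (matching t) G" "card (edges F) = size_ramsey (matching t) G"
proof -
  from assms obtain F where "wf_graph F" "arrows F (matching t) G"
    unfolding ex_arrow_def by auto
  then have "\<exists>m F. wf_graph F \<and> arrows F (matching t) G \<and> card (edges F) = m" by blast
  from LeastI_ex[OF this] show ?thesis using that unfolding size_ramsey_def by blast
qed

lemma sr_le: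
  assumes "wf_graph F" "arrows F (matching t) G"
  shows "size_ramsey (matching t) G \<le> card (edges F)"
  unfolding size_ramsey_def using assms by (intro Least_le) blast

lemma sr_subadd:
  assumes "ex_arrow s G" "ex_arrow t G"
  shows "size_ramsey (matching (s + t)) G \<le> size_ramsey (matching s) G + size_ramsey (matching t) G"
proof -
  obtain F1 where F1: "wf_graph F1" "arrows F1 (matching s) G" "card (edges F1) = size_ramsey (matching s) G"
    using sr_witness[OF assms(1)] by blast
  obtain F2 where F2: "wf_graph F2" "arrows F2 (matching t) G" "card (edges F2) = size_ramsey (matching t) G"
    using sr_witness[OF assms(2)] by blast
  define V1 E1 V2 E2 where "V1 = verts F1" "E1 = edges F1" "V2 = verts F2" "E2 = edges F2"
  have fin1: "finite V1" "finite E1" using F1(1) wf_edges_finite[OF F1(1)] by (auto simp: V1_E1_V2_E2_def wf_graph_def)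
  have fin2: "finite V2" "finite E2" using F2(1) wf_edges_finite[OF F2(1)] by (auto simp: V1_E1_V2_E2_def wf_graph_def)
  define n0 where "n0 = Suc (\<Sum>V1)"
  have n0: "\<And>x. x \<in> V1 \<Longrightarrow> x < n0"
  proof -
    fix x assume "x \<in> V1"
    then have "id x \<le> sum id V1" using fin1(1) by (intro member_le_sum) auto
    then show "x < n0" unfolding n0_def by simp
  qed
  define \<phi> where "\<phi> x = x + n0" for x
  have injphi: "inj_on \<phi> A" for A by (auto simp: inj_on_def \<phi>_def)
  define F where "F = (V1 \<union> \<phi> ` V2, E1 \<union> (\<lambda>e. \<phi> ` e) ` E2)"
  have disj: "V1 \<inter> \<phi> ` V2 = {}" using n0 by (force simp: \<phi>_def)
  have wfF: "wf_graph F"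
  proof -
    have "finite (verts F)" using fin1 fin2 by (simp add: F_def verts_def)
    moreover have "\<exists>u v. u \<noteq> v \<and> u \<in> verts F \<and> v \<in> verts F \<and> e = {u, v}" if "e \<in> edges F" for e
    proof -
      from that have "e \<in> E1 \<or> e \<in> (\<lambda>e. \<phi> ` e) ` E2" by (simp add: F_def edges_def)
      then show ?thesis
      proof
        assume "e \<in> E1"
        then obtain u v where "u \<noteq> v" "u \<in> V1" "v \<in> V1" "e = {u,v}"
          using F1(1) unfolding wf_graph_def V1_E1_V2_E2_def by blast
        then show ?thesis by (auto simp: F_def verts_def)
      next
        assume "e \<in> (\<lambda>e. \<phi> ` e) ` E2"
        then obtain e2 where e2: "e2 \<in> E2" "e = \<phi> ` e2" by auto
        then obtain u v where "u \<noteq> v" "u \<in> V2" "v \<in> V2" "e2 = {u,v}"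
          using F2(1) unfolding wf_graph_def V1_E1_V2_E2_def by blast
        then show ?thesis using e2 by (intro exI[of _ "\<phi> u"] exI[of _ "\<phi> v"]) (auto simp: F_def verts_def \<phi>_def)
      qed
    qed
    ultimately show ?thesis unfolding wf_graph_def by blast
  qed
  have cardF: "card (edges F) \<le> card E1 + card E2"
  proof -
    have "card (edges F) \<le> card E1 + card ((\<lambda>e. \<phi> ` e) ` E2)"
      by (simp add: F_def edges_def card_Un_le)
    also have "\<dots> \<le> card E1 + card E2" using card_image_le[OF fin2(2)] by simp
    finally show ?thesis .
  qed
  have arr: "arrows F (matching (s + t)) G"
    unfolding arrows_def
  proof (intro allI impI)
    fix R assume R: "R \<subseteq> edges F"
    define R1 where "R1 = R \<inter> E1"
    define R2 where "R2 = {e \<in> E2. \<phi> ` e \<in> R}"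
    have vF: "verts F = V1 \<union> \<phi> ` V2" and eF: "edges F = E1 \<union> (\<lambda>e. \<phi> ` e) ` E2"
      by (simp_all add: F_def verts_def edges_def)
    have c1: "has_copy (matching s) (V1, R1) \<or> has_copy G (V1, E1 - R1)"
      using F1(2) unfolding arrows_def V1_E1_V2_E2_def R1_def by auto
    have c2: "has_copy (matching t) (V2, R2) \<or> has_copy G (V2, E2 - R2)"
      using F2(2) unfolding arrows_def V1_E1_V2_E2_def R2_def by auto
    show "has_copy (matching (s + t)) (verts F, R) \<or> has_copy G (verts F, edges F - R)"
    proof (cases "has_copy G (V1, E1 - R1)")
      case True
      then have "has_copy G (verts F, edges F - R)"
        by (rule copy_mono) (auto simp: vF eF R1_def)
      then show ?thesis ..
    next
      case False
      note m1 = False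
      show ?thesis
      proof (cases "has_copy G (V2, E2 - R2)")
        case True
        then have "has_copy G (verts F, edges F - R)"
        proof (rule copy_map[OF _ injphi])
          show "\<phi> ` V2 \<subseteq> verts F" by (simp add: vF)
          fix e assume "e \<in> E2 - R2" then show "\<phi> ` e \<in> edges F - R"
            by (auto simp: eF R2_def)
        qed
        then show ?thesis ..
      next
        case False
        have a1: "has_copy (matching s) (V1, R)" using c1 m1 by (rule_tac copy_mono) (auto simp: R1_def)
        have a2: "has_copy (matching t) (\<phi> ` V2, R)"
        proof (rule copy_map[OF _ injphi])
          show "has_copy (matching t) (V2, R2)" using c2 False by auto
          fix e assume "e \<in> R2" then show "\<phi> ` e \<in> R" by (auto simp: R2_def)
        qed simp
        have "has_copy (matching (s + t)) (V1 \<union> \<phi> ` V2, R)"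
          by (rule copy_matching_combine[OF a1 a2 disj])
        then show ?thesis by (simp add: vF)
      qed
    qed
  qed
  have "size_ramsey (matching (s + t)) G \<le> card (edges F)" by (rule sr_le[OF wfF arr])
  also have "\<dots> \<le> card E1 + card E2" by (rule cardF)
  finally show ?thesis using F1(3) F2(3) by (simp add: V1_E1_V2_E2_def)
qed

lemma edge_count_lb:
  fixes E :: "nat set set"
  assumes "finite E"
    and "\<And>S. finite S \<Longrightarrow> card S < t \<Longrightarrow> (\<exists>v. v \<notin> S \<and> D \<le> card {e\<in>E. v \<in> e \<and> e \<inter> S = {}})"
  shows "t * D \<le> card E"
  using assms
proof (induction t arbitrary: E)
  case 0 then show ?case by simp
next
  case (Suc t)
  obtain v where v: "D \<le> card {e\<in>E. v \<in> e \<and> e \<inter> {} = {}}" using Suc.prems(2)[of "{}"] by auto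
  define E' where "E' = {e\<in>E. v \<notin> e}"
  have fE': "finite E'" using Suc.prems(1) by (simp add: E'_def)
  have "t * D \<le> card E'"
  proof (rule Suc.IH[OF fE'])
    fix S' :: "nat set" assume S': "finite S'" "card S' < t"
    have "card (insert v S') < Suc t" using S' by (simp add: card_insert_if)
    then obtain w where w: "w \<notin> insert v S'" "D \<le> card {e\<in>E. w \<in> e \<and> e \<inter> insert v S' = {}}"
      using Suc.prems(2)[of "insert v S'"] S' by auto
    have "{e\<in>E. w \<in> e \<and> e \<inter> insert v S' = {}} = {e\<in>E'. w \<in> e \<and> e \<inter> S' = {}}"
      by (auto simp: E'_def)
    then show "\<exists>w. w \<notin> S' \<and> D \<le> card {e\<in>E'. w \<in> e \<and> e \<inter> S' = {}}" using w by auto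
  qed
  moreover have "card E = card E' + card {e\<in>E. v \<in> e}"
  proof -
    have "E = E' \<union> {e\<in>E. v \<in> e}" "E' \<inter> {e\<in>E. v \<in> e} = {}" by (auto simp: E'_def)
    then show ?thesis using Suc.prems(1) fE' by (metis card_Un_disjoint finite_Un)
  qed
  ultimately show ?case using v by simp
qed

lemma arrows_lb:
  assumes wfF: "wf_graph F" and wfG: "wf_graph G" and c: "c \<in> verts G"
    and arr: "arrows F (matching t) G"
  shows "t * degree G c \<le> card (edges F)"
proof (cases "degree G c = 0")
  case True then show ?thesis by simp
next
  case False
  show ?thesis
  proof (rule edge_count_lb[OF wf_edges_finite[OF wfF]])
    fix S :: "nat set" assume S: "finite S" "card S < t"
    define R where "R = {e\<in>edges F. e \<inter> S \<noteq> {}}"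
    have "has_copy (matching t) (verts F, R) \<or> has_copy G (verts F, edges F - R)"
      using arr unfolding arrows_def R_def by auto
    moreover have "\<not> has_copy (matching t) (verts F, R)"
    proof
      assume "has_copy (matching t) (verts F, R)"
      then obtain f where f: "inj_on f {..<2*t}" "\<forall>e\<in>edges (matching t). f ` e \<in> R"
        unfolding has_copy_def matching_verts by (auto simp: edges_def)
      have "\<exists>a. a \<in> {2*i, 2*i+1} \<and> f a \<in> S" if "i < t" for i
      proof -
        have "f ` {2*i, 2*i+1} \<in> R" using f(2) that unfolding matching_edges by blast
        then show ?thesis unfolding R_def by auto
      qed
      then obtain a where a: "\<And>i. i < t \<Longrightarrow> a i \<in> {2*i, 2*i+1} \<and> f (a i) \<in> S" by metis
      have "inj_on (\<lambda>i. f (a i)) {..<t}"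
      proof (rule inj_onI)
        fix i j assume ij: "i \<in> {..<t}" "j \<in> {..<t}" "f (a i) = f (a j)"
        have "a i < 2*t" "a j < 2*t" using a[of i] a[of j] ij by auto
        then have "a i = a j" using f(1) ij(3) by (auto simp: inj_on_def)
        then have "a i div 2 = a j div 2" by simp
        moreover have "a i div 2 = i" "a j div 2 = j" using a[of i] a[of j] ij by auto
        ultimately show "i = j" by simp
      qed
      then have "card ((\<lambda>i. f (a i)) ` {..<t}) = t" by (simp add: card_image)
      moreover have "(\<lambda>i. f (a i)) ` {..<t} \<subseteq> S" using a by auto
      ultimately have "t \<le> card S" using S(1) by (metis card_mono)
      then show False using S(2) by simp
    qed
    ultimately have "has_copy G (verts F, edges F - R)" by blast
    then obtain g where g: "inj_on g (verts G)" "\<forall>e\<in>edges G. g ` e \<in> edges F - R"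
      unfolding has_copy_def by (auto simp: verts_def edges_def)
    define Ec where "Ec = {e\<in>edges G. c \<in> e}"
    have Ecsub: "Ec \<subseteq> Pow (verts G)" using wf_edges_Pow[OF wfG] unfolding Ec_def by blast
    have injim: "inj_on ((`) g) Ec"
      using inj_on_image_Pow[OF g(1)] Ecsub by (rule inj_on_subset)
    have sub: "(`) g ` Ec \<subseteq> {e\<in>edges F. g c \<in> e \<and> e \<inter> S = {}}"
      using g(2) by (auto simp: Ec_def R_def)
    have fin: "finite {e\<in>edges F. g c \<in> e \<and> e \<inter> S = {}}" using wf_edges_finite[OF wfF] by simp
    have "degree G c = card ((`) g ` Ec)" unfolding degree_def Ec_def[symmetric]
      using injim by (simp add: card_image)
    also have "\<dots> \<le> card {e\<in>edges F. g c \<in> e \<and> e \<inter> S = {}}" by (rule card_mono[OF fin sub])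
    finally have dle: "degree G c \<le> card {e\<in>edges F. g c \<in> e \<and> e \<inter> S = {}}" .
    have "Ec \<noteq> {}"
    proof
      assume "Ec = {}" then have "degree G c = 0" unfolding degree_def Ec_def[symmetric] by simp
      then show False using False by simp
    qed
    then obtain e0 where "e0 \<in> Ec" by blast
    then have "g ` e0 \<in> edges F - R" "g c \<in> g ` e0" using g(2) by (auto simp: Ec_def)
    then have "g c \<notin> S" by (auto simp: R_def)
    then show "\<exists>v. v \<notin> S \<and> degree G c \<le> card {e\<in>edges F. v \<in> e \<and> e \<inter> S = {}}"
      using dle by blast
  qed
qed

lemma max_matching:
  assumes finR: "finite R"
    and Redge: "\<And>e. e \<in> R \<Longrightarrow> \<exists>u v. u \<noteq> v \<and> e = {u, v}"
    and RV: "\<And>e. e \<in> R \<Longrightarrow> e \<subseteq> V"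
    and nocopy: "\<not> has_copy (matching t) (V, R)"
  obtains M where "M \<subseteq> R" "card M < t" "\<And>e. e \<in> R \<Longrightarrow> e \<inter> \<Union>M \<noteq> {}"
proof -
  define P where "P M \<longleftrightarrow> M \<subseteq> R \<and> (\<forall>e1\<in>M. \<forall>e2\<in>M. e1 \<noteq> e2 \<longrightarrow> e1 \<inter> e2 = {})" for M
  have "P {}" by (simp add: P_def)
  moreover have "\<forall>M. P M \<longrightarrow> card M < Suc (card R)"
    using finR by (auto simp: P_def intro!: le_imp_less_Suc card_mono)
  ultimately obtain M where PM: "P M" and Mmax: "\<And>M'. P M' \<Longrightarrow> card M' \<le> card M"
    using ex_has_greatest_nat[of P "{}" card "Suc (card R)"] by blast
  have MR: "M \<subseteq> R" and Mdisj: "\<And>e1 e2. e1 \<in> M \<Longrightarrow> e2 \<in> M \<Longrightarrow> e1 \<noteq> e2 \<Longrightarrow> e1 \<inter> e2 = {}"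
    using PM by (auto simp: P_def)
  have finM: "finite M" using MR finR by (rule finite_subset)
  have cardM: "card M < t"
  proof (rule ccontr)
    assume "\<not> card M < t"
    then obtain M' where M': "M' \<subseteq> M" "card M' = t" "finite M'"
      using obtain_subset_with_card_n[of t M] by auto
    obtain b where b: "bij_betw b {0..<t} M'" using ex_bij_betw_nat_finite[OF M'(3)] M'(2) by auto
    define ep1 where "ep1 e = (SOME u. \<exists>v. u \<noteq> v \<and> e = {u, v})" for e :: "nat set"
    define ep2 where "ep2 e = (SOME v. ep1 e \<noteq> v \<and> e = {ep1 e, v})" for e :: "nat set"
    have ep: "ep1 e \<noteq> ep2 e \<and> e = {ep1 e, ep2 e}" if "e \<in> R" for e
    proof -
      have "\<exists>u v. u \<noteq> v \<and> e = {u, v}" using Redge[OF that] .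
      then have "\<exists>v. ep1 e \<noteq> v \<and> e = {ep1 e, v}" unfolding ep1_def by (rule someI_ex)
      then show ?thesis unfolding ep2_def by (rule someI_ex)
    qed
    have bR: "b i \<in> R" if "i < t" for i using b that M'(1) MR unfolding bij_betw_def by force
    define f where "f x = (if even x then ep1 (b (x div 2)) else ep2 (b (x div 2)))" for x
    have fin: "f x \<in> b (x div 2)" if "x < 2*t" for x
    proof -
      have "x div 2 < t" using that by simp
      then have "b (x div 2) = {ep1 (b (x div 2)), ep2 (b (x div 2))}" using ep[OF bR] by blast
      then show ?thesis unfolding f_def by (metis insertI1 insertI2 singletonI)
    qed
    have "inj_on f {..<2*t}"
    proof (rule inj_onI)
      fix x y assume xy: "x \<in> {..<2*t}" "y \<in> {..<2*t}" "f x = f y"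
      show "x = y"
      proof (cases "x div 2 = y div 2")
        case True
        have "ep1 (b (x div 2)) \<noteq> ep2 (b (x div 2))" using ep[OF bR[of "x div 2"]] xy by auto
        then have "even x = even y" using xy(3) True by (auto simp: f_def split: if_splits)
        then show ?thesis using True by (metis div_mult_mod_eq even_iff_mod_2_eq_zero odd_iff_mod_2_eq_one)
      next
        case False
        have xt: "x div 2 \<in> {0..<t}" "y div 2 \<in> {0..<t}" using xy by auto
        have injb: "inj_on b {0..<t}" using b by (simp add: bij_betw_def)
        have "b (x div 2) \<noteq> b (y div 2)" using False inj_onD[OF injb _ xt] by blast
        moreover have "b (x div 2) \<in> M" "b (y div 2) \<in> M" using bij_betwE[OF b] xt M'(1) by blast+
        ultimately have "b (x div 2) \<inter> b (y div 2) = {}" using Mdisj by blast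
        then show ?thesis using fin[of x] fin[of y] xy by auto
      qed
    qed
    moreover have "f ` {..<2*t} \<subseteq> V"
    proof
      fix z assume "z \<in> f ` {..<2*t}"
      then obtain x where x: "x < 2*t" "z = f x" by auto
      then have "x div 2 < t" by simp
      then have "b (x div 2) \<subseteq> V" using bR RV by blast
      then show "z \<in> V" using fin[OF x(1)] x(2) by blast
    qed
    moreover have "\<forall>e\<in>edges (matching t). f ` e \<in> R"
    proof
      fix e assume "e \<in> edges (matching t)"
      then obtain i where i: "i < t" "e = {2*i, 2*i+1}" by (auto simp: matching_edges)
      have "f ` e = {ep1 (b i), ep2 (b i)}" using i by (auto simp: f_def)
      also have "\<dots> = b i" using ep[OF bR[OF i(1)]] by simp
      finally show "f ` e \<in> R" using bR[OF i(1)] by simp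
    qed
    ultimately have "has_copy (matching t) (V, R)"
      unfolding has_copy_def matching_verts by (auto simp: verts_def edges_def)
    then show False using nocopy by simp
  qed
  have cover: "e \<inter> \<Union>M \<noteq> {}" if e: "e \<in> R" for e
  proof
    assume dis: "e \<inter> \<Union>M = {}"
    have ene: "e \<noteq> {}" using Redge[OF e] by auto
    then have "e \<notin> M" using dis by auto
    have "P (insert e M)" using PM e dis unfolding P_def by auto
    then have "card (insert e M) \<le> card M" by (rule Mmax)
    then show False using \<open>e \<notin> M\<close> finM by simp
  qed
  show ?thesis using that[OF MR cardM cover] .
qed

definition hubof :: "nat \<Rightarrow> nat \<Rightarrow> nat \<Rightarrow> nat" where
  "hubof D k v = Suc ((v - Suc D) div k)"

definition Gr :: "nat \<Rightarrow> nat \<Rightarrow> nat \<Rightarrow> graph" where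
  "Gr N D k = ({..<N}, {{0, i} | i. 1 \<le> i \<and> i \<le> D} \<union> {{v, hubof D k v} | v. D < v \<and> v < N})"

definition Uv :: "nat \<Rightarrow> nat" where "Uv j = 4 * j"
definition ULv :: "nat \<Rightarrow> nat \<Rightarrow> nat" where "ULv j p = 4 * prod_encode (j, p) + 1"
definition Hv :: "nat \<Rightarrow> nat" where "Hv i = 4 * i + 2"
definition HLv :: "nat \<Rightarrow> nat \<Rightarrow> nat" where "HLv i q = 4 * prod_encode (i, q) + 3"

definition EU :: "nat \<Rightarrow> nat \<Rightarrow> nat set set" where
  "EU t L = (\<lambda>(j, p). {Uv j, ULv j p}) ` ({..<t} \<times> {..<L})"
definition EH :: "nat \<Rightarrow> nat \<Rightarrow> nat set set" where
  "EH t A = (\<lambda>(j, i). {Uv j, Hv i}) ` ({..<t} \<times> {..<A})"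
definition EL :: "nat \<Rightarrow> nat \<Rightarrow> nat set set" where
  "EL A k = (\<lambda>(i, q). {Hv i, HLv i q}) ` ({..<A} \<times> {..<k})"
definition VF :: "nat \<Rightarrow> nat \<Rightarrow> nat \<Rightarrow> nat \<Rightarrow> nat set" where
  "VF t L A k = Uv ` {..<t} \<union> (\<lambda>(j, p). ULv j p) ` ({..<t} \<times> {..<L}) \<union> Hv ` {..<A}
     \<union> (\<lambda>(i, q). HLv i q) ` ({..<A} \<times> {..<k})"
definition FF :: "nat \<Rightarrow> nat \<Rightarrow> nat \<Rightarrow> nat \<Rightarrow> graph" where
  "FF t L A k = (VF t L A k, EU t L \<union> EH t A \<union> EL A k)"

lemma mod4 [simp]: "Uv j mod 4 = 0" "ULv j p mod 4 = 1" "Hv i mod 4 = 2" "HLv i q mod 4 = 3"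
  unfolding Uv_def ULv_def Hv_def HLv_def by presburger+

lemma vinj [simp]: "Uv j = Uv j' \<longleftrightarrow> j = j'" "ULv j p = ULv j' p' \<longleftrightarrow> j = j' \<and> p = p'"
  "Hv i = Hv i' \<longleftrightarrow> i = i'" "HLv i q = HLv i' q' \<longleftrightarrow> i = i' \<and> q = q'"
  by (auto simp: Uv_def ULv_def Hv_def HLv_def dest: inj_onD[OF inj_prod_encode, of "(_, _)" "(_, _)", simplified])

lemma vdist [simp]: "Uv j \<noteq> ULv j' p" "Uv j \<noteq> Hv i" "Uv j \<noteq> HLv i q" "ULv j p \<noteq> Hv i"
  "ULv j p \<noteq> HLv i q" "Hv i \<noteq> HLv i' q"
  "ULv j' p \<noteq> Uv j" "Hv i \<noteq> Uv j" "HLv i q \<noteq> Uv j" "Hv i \<noteq> ULv j p"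
  "HLv i q \<noteq> ULv j p" "HLv i' q \<noteq> Hv i"
  by (metis mod4 zero_neq_one numeral_One numeral_eq_iff semiring_norm(83,85,86,89) zero_neq_numeral)+

lemma FF_verts: "verts (FF t L A k) = VF t L A k" and FF_edges: "edges (FF t L A k) = EU t L \<union> EH t A \<union> EL A k"
  by (simp_all add: FF_def verts_def edges_def)

lemma FF_wf: "wf_graph (FF t L A k)"
proof -
  have "finite (VF t L A k)" by (simp add: VF_def)
  moreover have "\<exists>u v. u \<noteq> v \<and> u \<in> VF t L A k \<and> v \<in> VF t L A k \<and> e = {u, v}"
    if "e \<in> EU t L \<union> EH t A \<union> EL A k" for e
  proof -
    have U: "Uv j \<in> VF t L A k" if "j < t" for j using that by (simp add: VF_def)
    have UL: "ULv j p \<in> VF t L A k" if "j < t" "p < L" for j p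
      using that unfolding VF_def by (intro UnI1 UnI2 rev_image_eqI[of "(j, p)"]) auto
    have H: "Hv i \<in> VF t L A k" if "i < A" for i using that by (simp add: VF_def)
    have HL: "HLv i q \<in> VF t L A k" if "i < A" "q < k" for i q
      using that unfolding VF_def by (intro UnI2 rev_image_eqI[of "(i, q)"]) auto
    from that consider (a) j p where "j < t" "p < L" "e = {Uv j, ULv j p}"
      | (b) j i where "j < t" "i < A" "e = {Uv j, Hv i}"
      | (c) i q where "i < A" "q < k" "e = {Hv i, HLv i q}"
      unfolding EU_def EH_def EL_def by blast
    then show ?thesis
    proof cases
      case a then show ?thesis using U UL by (intro exI[of _ "Uv j"] exI[of _ "ULv j p"]) simp
    next
      case b then show ?thesis using U H by (intro exI[of _ "Uv j"] exI[of _ "Hv i"]) simp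
    next
      case c then show ?thesis using H HL by (intro exI[of _ "Hv i"] exI[of _ "HLv i q"]) simp
    qed
  qed
  ultimately show ?thesis unfolding wf_graph_def FF_verts FF_edges by blast
qed

lemma FF_card: "card (edges (FF t L A k)) \<le> t * L + t * A + A * k"
proof -
  have "card (EU t L) \<le> t * L"
  proof -
    have "card (EU t L) \<le> card ({..<t} \<times> {..<L})" unfolding EU_def by (rule card_image_le) simp
    then show ?thesis by (simp add: card_cartesian_product)
  qed
  moreover have "card (EH t A) \<le> t * A"
  proof -
    have "card (EH t A) \<le> card ({..<t} \<times> {..<A})" unfolding EH_def by (rule card_image_le) simp
    then show ?thesis by (simp add: card_cartesian_product)
  qed
  moreover have "card (EL A k) \<le> A * k"
  proof -
    have "card (EL A k) \<le> card ({..<A} \<times> {..<k})" unfolding EL_def by (rule card_image_le) simp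
    then show ?thesis by (simp add: card_cartesian_product)
  qed
  moreover have "card (EU t L \<union> EH t A \<union> EL A k) \<le> card (EU t L) + card (EH t A) + card (EL A k)"
    by (meson add_le_mono card_Un_le le_trans order_refl)
  ultimately show ?thesis unfolding FF_edges by linarith
qed

definition uof :: "nat \<Rightarrow> nat" where
  "uof x = (if x mod 4 = 0 then x div 4 else fst (prod_decode (x div 4)))"
definition hof :: "nat \<Rightarrow> nat" where
  "hof x = (if x mod 4 = 2 then x div 4 else fst (prod_decode (x div 4)))"

lemma div4: "Uv j div 4 = j" "ULv j p div 4 = prod_encode (j, p)" "Hv i div 4 = i" "HLv i q div 4 = prod_encode (i, q)"
  unfolding Uv_def ULv_def Hv_def HLv_def by presburger+

lemma dvd4 [simp]: "4 dvd Uv j" "\<not> 4 dvd ULv j p" "\<not> 4 dvd Hv i" "\<not> 4 dvd HLv i q"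
  by (simp_all add: dvd_eq_mod_eq_0)

lemma uof_simps [simp]: "uof (Uv j) = j" "uof (ULv j p) = j"
  unfolding uof_def by (simp_all add: div4)
lemma hof_simps [simp]: "hof (Hv i) = i" "hof (HLv i q) = i"
  unfolding hof_def by (simp_all add: div4)

lemma edge_unit:
  assumes "e \<in> EU t L \<union> EH t A \<union> EL A k" "x \<in> e" "y \<in> e"
    "x mod 4 = 0 \<or> x mod 4 = 1" "y mod 4 = 0 \<or> y mod 4 = 1"
  shows "uof x = uof y"
  using assms unfolding EU_def EH_def EL_def by auto

lemma edge_hub:
  assumes "e \<in> EU t L \<union> EH t A \<union> EL A k" "x \<in> e" "y \<in> e"
    "x mod 4 = 2 \<or> x mod 4 = 3" "y mod 4 = 2 \<or> y mod 4 = 3"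
  shows "hof x = hof y"
  using assms unfolding EU_def EH_def EL_def by auto

lemma Gr_verts: "verts (Gr N D k) = {..<N}"
  and Gr_edges: "edges (Gr N D k) = {{0, i} | i. 1 \<le> i \<and> i \<le> D} \<union> {{v, hubof D k v} | v. D < v \<and> v < N}"
  by (simp_all add: Gr_def verts_def edges_def)

lemma FF_arrows:
  assumes k: "1 \<le> k" and mD: "m \<le> D" and hub: "\<And>v. D < v \<Longrightarrow> v < N \<Longrightarrow> hubof D k v \<le> m"
    and t: "1 \<le> t" and DN: "D < N"
  shows "arrows (FF t (D - m) (t - 1 + m) k) (matching t) (Gr N D k)"
  unfolding arrows_def
proof (intro allI impI)
  define L A where "L = D - m" and "A = t - 1 + m"
  define EF where "EF = EU t L \<union> EH t A \<union> EL A k"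
  define V where "V = VF t L A k"
  fix R assume R: "R \<subseteq> edges (FF t (D - m) (t - 1 + m) k)"
  then have RE: "R \<subseteq> EF" by (simp add: FF_edges EF_def L_def A_def)
  show "has_copy (matching t) (verts (FF t (D - m) (t - 1 + m) k), R) \<or>
        has_copy (Gr N D k) (verts (FF t (D - m) (t - 1 + m) k), edges (FF t (D - m) (t - 1 + m) k) - R)"
  proof (cases "has_copy (matching t) (V, R)")
    case True then show ?thesis by (simp add: FF_verts V_def L_def A_def)
  next
    case False
    have wf: "wf_graph (FF t L A k)" by (rule FF_wf)
    have finEF: "finite EF" using wf_edges_finite[OF wf] by (simp add: FF_edges EF_def)
    obtain M where MR: "M \<subseteq> R" and cardM: "card M < t" and cover: "\<And>e. e \<in> R \<Longrightarrow> e \<inter> \<Union>M \<noteq> {}"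
    proof (rule max_matching[OF _ _ _ False])
      show "finite R" using RE finEF by (rule finite_subset)
      fix e assume "e \<in> R"
      then have eF: "e \<in> edges (FF t L A k)" using RE unfolding FF_edges EF_def by blast
      from wf_edgeD[OF wf eF] show "\<exists>u v. u \<noteq> v \<and> e = {u, v}" by blast
      from wf_edgeD[OF wf eF] show "e \<subseteq> V" by (auto simp: FF_verts V_def)
    qed blast
    have finM: "finite M" using MR RE finEF by (meson finite_subset)
    define T where "T = \<Union>M"
    define goodU where "goodU j \<longleftrightarrow> Uv j \<notin> T \<and> (\<forall>p<L. ULv j p \<notin> T)" for j
    define goodH where "goodH i \<longleftrightarrow> Hv i \<notin> T \<and> (\<forall>q<k. HLv i q \<notin> T)" for i
    define eu where "eu e = uof (SOME x. x \<in> e \<and> (x mod 4 = 0 \<or> x mod 4 = 1))" for e :: "nat set"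
    define eh where "eh e = hof (SOME x. x \<in> e \<and> (x mod 4 = 2 \<or> x mod 4 = 3))" for e :: "nat set"
    have badU: "{j\<in>{..<t}. \<not> goodU j} \<subseteq> eu ` M"
    proof
      fix j assume "j \<in> {j\<in>{..<t}. \<not> goodU j}"
      then obtain x where x: "x \<in> T" "x = Uv j \<or> (\<exists>p. x = ULv j p)" unfolding goodU_def by auto
      then obtain e where e: "e \<in> M" "x \<in> e" unfolding T_def by auto
      have xm: "x mod 4 = 0 \<or> x mod 4 = 1" and ux: "uof x = j" using x(2) by auto
      have ex: "\<exists>y. y \<in> e \<and> (y mod 4 = 0 \<or> y mod 4 = 1)" using e(2) xm by (intro exI[of _ x]) simp
      define y where "y = (SOME y. y \<in> e \<and> (y mod 4 = 0 \<or> y mod 4 = 1))"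
      have y: "y \<in> e" "y mod 4 = 0 \<or> y mod 4 = 1" using someI_ex[OF ex] unfolding y_def by blast+
      have "e \<in> EF" using e MR RE by blast
      then have "uof y = uof x" using edge_unit[of e t L A k y x] y e xm unfolding EF_def by blast
      then have "eu e = j" using ux unfolding eu_def y_def by simp
      then show "j \<in> eu ` M" using e by blast
    qed
    have badH: "{i\<in>{..<A}. \<not> goodH i} \<subseteq> eh ` M"
    proof
      fix i assume "i \<in> {i\<in>{..<A}. \<not> goodH i}"
      then obtain x where x: "x \<in> T" "x = Hv i \<or> (\<exists>q. x = HLv i q)" unfolding goodH_def by auto
      then obtain e where e: "e \<in> M" "x \<in> e" unfolding T_def by auto
      have xm: "x mod 4 = 2 \<or> x mod 4 = 3" and ux: "hof x = i" using x(2) by auto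
      have ex: "\<exists>y. y \<in> e \<and> (y mod 4 = 2 \<or> y mod 4 = 3)" using e(2) xm by (intro exI[of _ x]) simp
      define y where "y = (SOME y. y \<in> e \<and> (y mod 4 = 2 \<or> y mod 4 = 3))"
      have y: "y \<in> e" "y mod 4 = 2 \<or> y mod 4 = 3" using someI_ex[OF ex] unfolding y_def by blast+
      have "e \<in> EF" using e MR RE by blast
      then have "hof y = hof x" using edge_hub[of e t L A k y x] y e xm unfolding EF_def by blast
      then have "eh e = i" using ux unfolding eh_def y_def by simp
      then show "i \<in> eh ` M" using e by blast
    qed
    have cbU: "card {j\<in>{..<t}. \<not> goodU j} < t"
      using card_mono[OF finite_imageI[OF finM] badU] card_image_le[OF finM, of eu] cardM by linarith
    have cbH: "card {i\<in>{..<A}. \<not> goodH i} \<le> t - 1"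
      using card_mono[OF finite_imageI[OF finM] badH] card_image_le[OF finM, of eh] cardM by linarith
    obtain j0 where j0: "j0 < t" "goodU j0"
    proof (rule ccontr)
      assume "\<not> thesis"
      then have "{j\<in>{..<t}. \<not> goodU j} = {..<t}" using that by blast
      then show False using cbU by simp
    qed
    define GH where "GH = {i\<in>{..<A}. goodH i}"
    have "GH = {..<A} - {i\<in>{..<A}. \<not> goodH i}" by (auto simp: GH_def)
    then have "card GH = A - card {i\<in>{..<A}. \<not> goodH i}"
      by (metis (no_types, lifting) card_Diff_subset card_lessThan finite_lessThan finite_subset mem_Collect_eq lessThan_iff subsetI)
    then have cGH: "m \<le> card GH" using cbH unfolding A_def by linarith
    obtain S where S: "S \<subseteq> GH" "card S = m" "finite S" using obtain_subset_with_card_n[OF cGH] by blast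
    obtain \<sigma> where \<sigma>: "bij_betw \<sigma> {1..m} S" using ex_bij_betw_nat_finite_1[OF S(3)] S(2) by auto
    have \<sigma>GH: "\<sigma> i < A \<and> goodH (\<sigma> i)" if "1 \<le> i" "i \<le> m" for i
      using bij_betwE[OF \<sigma>] S(1) that unfolding GH_def by auto
    have \<sigma>inj: "\<sigma> i = \<sigma> i' \<Longrightarrow> i \<in> {1..m} \<Longrightarrow> i' \<in> {1..m} \<Longrightarrow> i = i'" for i i'
      using \<sigma> unfolding bij_betw_def inj_on_def by blast
    have hub1: "1 \<le> hubof D k v" for v by (simp add: hubof_def)
    define g where "g v = (if v = 0 then Uv j0 else if v \<le> m then Hv (\<sigma> v)
       else if v \<le> D then ULv j0 (v - m - 1) else HLv (\<sigma> (hubof D k v)) ((v - Suc D) mod k))" for v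
    have gV: "g v \<in> V \<and> g v \<notin> T" if "v < N" for v
    proof -
      consider (z) "v = 0" | (h) "1 \<le> v" "v \<le> m" | (l) "m < v" "v \<le> D" | (r) "D < v"
        by linarith
      then show ?thesis
      proof cases
        case z then show ?thesis using j0 by (simp add: g_def V_def VF_def goodU_def)
      next
        case h then show ?thesis using \<sigma>GH[OF h] by (simp add: g_def V_def VF_def goodH_def)
      next
        case l
        have p: "v - m - 1 < L" using l unfolding L_def by linarith
        have "ULv j0 (v - m - 1) \<in> V" unfolding V_def VF_def
          using j0(1) p by (intro UnI1 UnI2 rev_image_eqI[of "(j0, v - m - 1)"]) auto
        then show ?thesis using l j0 p by (simp add: g_def goodU_def)
      next
        case r
        have hb: "1 \<le> hubof D k v" "hubof D k v \<le> m" using hub1 hub[OF r that] by auto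
        have q: "(v - Suc D) mod k < k" using k by simp
        have "HLv (\<sigma> (hubof D k v)) ((v - Suc D) mod k) \<in> V" unfolding V_def VF_def
          using \<sigma>GH[OF hb] q by (intro UnI2 rev_image_eqI[of "(\<sigma> (hubof D k v), (v - Suc D) mod k)"]) auto
        then show ?thesis using r mD \<sigma>GH[OF hb] q by (simp add: g_def goodH_def)
      qed
    qed
    have gmod: "g v mod 4 = (if v = 0 then 0 else if v \<le> m then 2 else if v \<le> D then 1 else 3)" for v
      by (simp add: g_def)
    have ginj: "inj_on g {..<N}"
    proof (rule inj_onI)
      fix x y assume x: "x \<in> {..<N}" and y: "y \<in> {..<N}" and e: "g x = g y"
      have cls: "(if x = 0 then 0 else if x \<le> m then 2 else if x \<le> D then 1 else 3) =
                 (if y = 0 then (0::nat) else if y \<le> m then 2 else if y \<le> D then 1 else 3)"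
        using gmod[of x] gmod[of y] e by simp
      consider (z) "x = 0" | (h) "1 \<le> x" "x \<le> m" | (l) "m < x" "x \<le> D" | (r) "D < x"
        by linarith
      then show "x = y"
      proof cases
        case z then show ?thesis using cls by (auto split: if_splits)
      next
        case h
        then have hy: "1 \<le> y" "y \<le> m" using cls by (auto split: if_splits)
        then have "\<sigma> x = \<sigma> y" using e h by (simp add: g_def)
        then show ?thesis using \<sigma>inj h hy by auto
      next
        case l
        then have ly: "m < y" "y \<le> D" using cls mD by (auto split: if_splits)
        have "x - m - 1 = y - m - 1" using e l ly by (simp add: g_def)
        then show ?thesis using l ly by linarith
      next
        case r
        then have ry: "D < y" using cls mD by (auto split: if_splits)
        have hx: "1 \<le> hubof D k x" "hubof D k x \<le> m" using hub1 hub[OF r] x by auto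
        have hy: "1 \<le> hubof D k y" "hubof D k y \<le> m" using hub1 hub[OF ry] y by auto
        have "\<sigma> (hubof D k x) = \<sigma> (hubof D k y) \<and> (x - Suc D) mod k = (y - Suc D) mod k"
          using e r ry mD by (simp add: g_def)
        then have "hubof D k x = hubof D k y" "(x - Suc D) mod k = (y - Suc D) mod k"
          using \<sigma>inj hx hy by auto
        then have "(x - Suc D) div k = (y - Suc D) div k" "(x - Suc D) mod k = (y - Suc D) mod k"
          by (auto simp: hubof_def)
        then have "x - Suc D = y - Suc D" by (metis div_mult_mod_eq)
        then show ?thesis using r ry by simp
      qed
    qed
    have gE: "g ` e \<in> EF" if "e \<in> edges (Gr N D k)" for e
    proof -
      from that consider (a) i where "1 \<le> i" "i \<le> D" "e = {0, i}"
        | (b) v where "D < v" "v < N" "e = {v, hubof D k v}"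
        unfolding Gr_edges by blast
      then show ?thesis
      proof cases
        case a
        show ?thesis
        proof (cases "i \<le> m")
          case True
          then have "g ` e = {Uv j0, Hv (\<sigma> i)}" using a by (auto simp: g_def)
          moreover have "{Uv j0, Hv (\<sigma> i)} \<in> EH t A" unfolding EH_def
            using j0(1) \<sigma>GH[OF a(1) True] by (intro rev_image_eqI[of "(j0, \<sigma> i)"]) auto
          ultimately show ?thesis by (simp add: EF_def)
        next
          case False
          then have "g ` e = {Uv j0, ULv j0 (i - m - 1)}" using a by (auto simp: g_def)
          moreover have "{Uv j0, ULv j0 (i - m - 1)} \<in> EU t L" unfolding EU_def
            using j0(1) False a(2) unfolding L_def by (intro rev_image_eqI[of "(j0, i - m - 1)"]) auto
          ultimately show ?thesis by (simp add: EF_def)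
        qed
      next
        case b
        have hb: "1 \<le> hubof D k v" "hubof D k v \<le> m" using hub1 hub[OF b(1,2)] by auto
        have "g ` e = {HLv (\<sigma> (hubof D k v)) ((v - Suc D) mod k), Hv (\<sigma> (hubof D k v))}"
          using b hb mD by (simp add: g_def)
        also have "\<dots> = {Hv (\<sigma> (hubof D k v)), HLv (\<sigma> (hubof D k v)) ((v - Suc D) mod k)}" by auto
        finally have ge: "g ` e = \<dots>" .
        have "{Hv (\<sigma> (hubof D k v)), HLv (\<sigma> (hubof D k v)) ((v - Suc D) mod k)} \<in> EL A k"
          unfolding EL_def using \<sigma>GH[OF hb] k
          by (intro rev_image_eqI[of "(\<sigma> (hubof D k v), (v - Suc D) mod k)"]) auto
        then show ?thesis using ge by (simp add: EF_def)
      qed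
    qed
    have gnR: "g ` e \<notin> R" if "e \<in> edges (Gr N D k)" for e
    proof
      assume "g ` e \<in> R"
      then have "g ` e \<inter> T \<noteq> {}" using cover unfolding T_def by blast
      moreover have "e \<subseteq> {..<N}"
      proof -
        from that consider (a) i where "1 \<le> i" "i \<le> D" "e = {0, i}"
          | (b) v where "D < v" "v < N" "e = {v, hubof D k v}"
          unfolding Gr_edges by blast
        then show ?thesis
        proof cases
          case a then show ?thesis using DN by auto
        next
          case b then show ?thesis using hub[OF b(1,2)] mD DN by auto
        qed
      qed
      ultimately show False using gV by blast
    qed
    have "has_copy (Gr N D k) (V, EF - R)"
      unfolding has_copy_def Gr_verts
      using ginj gV gE gnR by (auto simp: verts_def edges_def Gr_edges[symmetric])
    then show ?thesis by (simp add: FF_verts FF_edges V_def EF_def L_def A_def)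
  qed
qed

definition mh :: "nat \<Rightarrow> nat \<Rightarrow> nat \<Rightarrow> nat" where
  "mh N D k = Suc ((N - Suc (Suc D)) div k)"

locale grp =
  fixes N D k :: nat
  assumes k1: "1 \<le> k" and kD: "k + 1 \<le> D" and DN: "D < N" and mhD: "mh N D k \<le> D"
begin

lemma hub_le: "D < v \<Longrightarrow> v < N \<Longrightarrow> hubof D k v \<le> mh N D k"
  unfolding hubof_def mh_def by (simp add: div_le_mono)

lemma hub_ge: "1 \<le> hubof D k v" by (simp add: hubof_def)

lemma hub_D: "D < v \<Longrightarrow> v < N \<Longrightarrow> hubof D k v \<le> D"
  using hub_le mhD by (meson le_trans)

definition E1 where "E1 = (\<lambda>i. {0, i}) ` {1..D}"
definition E2 where "E2 = (\<lambda>v. {v, hubof D k v}) ` {D<..<N}"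

lemma edges_eq: "edges (Gr N D k) = E1 \<union> E2"
  unfolding Gr_edges E1_def E2_def by auto

lemma wf: "wf_graph (Gr N D k)"
  unfolding wf_graph_def Gr_verts edges_eq
proof (intro conjI ballI)
  fix e assume "e \<in> E1 \<union> E2"
  then show "\<exists>u v. u \<noteq> v \<and> u \<in> {..<N} \<and> v \<in> {..<N} \<and> e = {u, v}"
  proof
    assume "e \<in> E1" then obtain i where "1 \<le> i" "i \<le> D" "e = {0, i}" unfolding E1_def by auto
    then show ?thesis using DN by (intro exI[of _ 0] exI[of _ i]) auto
  next
    assume "e \<in> E2" then obtain v where v: "D < v" "v < N" "e = {v, hubof D k v}" unfolding E2_def by auto
    then show ?thesis using hub_D[OF v(1,2)] DN by (intro exI[of _ v] exI[of _ "hubof D k v"]) auto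
  qed
qed simp

lemma card_verts: "card (verts (Gr N D k)) = N" by (simp add: Gr_verts)

lemma card_edges: "card (edges (Gr N D k)) = N - 1"
proof -
  have c1: "card E1 = D" unfolding E1_def by (subst card_image) (auto simp: inj_on_def doubleton_eq_iff)
  have inj2: "inj_on (\<lambda>v. {v, hubof D k v}) {D<..<N}"
  proof (rule inj_onI)
    fix x y assume x: "x \<in> {D<..<N}" and y: "y \<in> {D<..<N}" and e: "{x, hubof D k x} = {y, hubof D k y}"
    have "hubof D k x \<le> D" "hubof D k y \<le> D" using hub_D x y by auto
    then show "x = y" using e x y by (auto simp: doubleton_eq_iff)
  qed
  have c2: "card E2 = N - Suc D" unfolding E2_def by (simp add: card_image[OF inj2])
  have disj: "E1 \<inter> E2 = {}"
  proof (rule ccontr)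
    assume "E1 \<inter> E2 \<noteq> {}"
    then obtain i v where "1 \<le> i" "i \<le> D" "D < v" "v < N" "{0, i} = {v, hubof D k v}"
      unfolding E1_def E2_def by auto
    then show False by (auto simp: doubleton_eq_iff)
  qed
  have "card (E1 \<union> E2) = D + (N - Suc D)"
    using card_Un_disjoint[OF _ _ disj] c1 c2 by (simp add: E1_def E2_def)
  then show ?thesis using DN by (simp add: edges_eq)
qed

lemma bip: "bipartite (Gr N D k)"
  unfolding bipartite_def
proof (intro exI[of _ "insert 0 {D<..<N}"] conjI ballI)
  show "insert 0 {D<..<N} \<subseteq> verts (Gr N D k)" using DN by (auto simp: Gr_verts)
  fix e assume "e \<in> edges (Gr N D k)"
  then have "e \<in> E1 \<union> E2" by (simp add: edges_eq)
  then show "card (e \<inter> insert 0 {D<..<N}) = 1"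
  proof
    assume "e \<in> E1" then obtain i where "1 \<le> i" "i \<le> D" "e = {0, i}" unfolding E1_def by auto
    then have "e \<inter> insert 0 {D<..<N} = {0}" by auto
    then show ?thesis by simp
  next
    assume "e \<in> E2" then obtain v where v: "D < v" "v < N" "e = {v, hubof D k v}" unfolding E2_def by auto
    then have "e \<inter> insert 0 {D<..<N} = {v}" using hub_D[OF v(1,2)] hub_ge[of v] by auto
    then show ?thesis by simp
  qed
qed

lemma conn: "connected_graph (Gr N D k)"
proof -
  let ?r = "\<lambda>x y. {x, y} \<in> edges (Gr N D k)"
  have sym: "?r x y \<Longrightarrow> ?r y x" for x y by (simp add: insert_commute)
  have to0: "?r\<^sup>*\<^sup>* u 0 \<and> ?r\<^sup>*\<^sup>* 0 u" if "u < N" for u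
  proof -
    have base: "?r\<^sup>*\<^sup>* i 0 \<and> ?r\<^sup>*\<^sup>* 0 i" if "i \<le> D" for i
    proof (cases "i = 0")
      case True then show ?thesis by simp
    next
      case False
      then have "?r 0 i" using that by (auto simp: edges_eq E1_def)
      then show ?thesis using sym by (meson r_into_rtranclp)
    qed
    show ?thesis
    proof (cases "u \<le> D")
      case True then show ?thesis using base by blast
    next
      case False
      then have "?r u (hubof D k u)" using that by (auto simp: edges_eq E2_def)
      moreover have "hubof D k u \<le> D" using hub_D False that by simp
      ultimately show ?thesis using base sym
        by (meson converse_rtranclp_into_rtranclp rtranclp.rtrancl_into_rtrancl)
    qed
  qed
  show ?thesis unfolding connected_graph_def
    using DN to0 by (auto simp: Gr_verts intro: rtranclp_trans)
qed

lemma deg0: "degree (Gr N D k) 0 = D"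
proof -
  have "{e \<in> edges (Gr N D k). 0 \<in> e} = E1"
  proof -
    have "0 \<notin> e" if "e \<in> E2" for e
    proof
      assume "0 \<in> e"
      from that obtain v where v: "D < v" "e = {v, hubof D k v}" unfolding E2_def by auto
      then show False using \<open>0 \<in> e\<close> hub_ge[of v] by auto
    qed
    then show ?thesis by (auto simp: edges_eq E1_def)
  qed
  moreover have "card E1 = D" unfolding E1_def by (subst card_image) (auto simp: inj_on_def doubleton_eq_iff)
  ultimately show ?thesis by (simp add: degree_def)
qed

lemma deg_le: "degree (Gr N D k) u \<le> D"
proof -
  have fin: "finite (edges (Gr N D k))" using wf by (rule wf_edges_finite)
  consider (z) "u = 0" | (h) "1 \<le> u" "u \<le> D" | (r) "D < u" by linarith
  then show ?thesis
  proof cases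
    case z then show ?thesis using deg0 by simp
  next
    case h
    define W where "W = {(u - 1) * k ..< (u - 1) * k + k}"
    have sub: "{e \<in> edges (Gr N D k). u \<in> e} \<subseteq> insert {0, u} ((\<lambda>w. {w + Suc D, u}) ` W)"
    proof
      fix e assume e: "e \<in> {e \<in> edges (Gr N D k). u \<in> e}"
      then have "e \<in> E1 \<union> E2" "u \<in> e" by (auto simp: edges_eq)
      then show "e \<in> insert {0, u} ((\<lambda>w. {w + Suc D, u}) ` W)"
      proof (elim UnE)
        assume "e \<in> E1" then obtain i where "e = {0, i}" unfolding E1_def by auto
        then show ?thesis using \<open>u \<in> e\<close> h by auto
      next
        assume "e \<in> E2" then obtain v where v: "D < v" "v < N" "e = {v, hubof D k v}" unfolding E2_def by auto
        then have hu: "hubof D k v = u" using \<open>u \<in> e\<close> h by auto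
        define w where "w = v - Suc D"
        have "w div k = u - 1" using hu unfolding hubof_def w_def by simp
        then have "w \<in> W" unfolding W_def using k1 div_times_less_eq_dividend[of w k] dividend_less_div_times[of k w]
          by (auto simp: algebra_simps)
        moreover have "e = {w + Suc D, u}" using v hu unfolding w_def by auto
        ultimately show ?thesis by blast
      qed
    qed
    have "card (insert {0, u} ((\<lambda>w. {w + Suc D, u}) ` W)) \<le> Suc (card ((\<lambda>w. {w + Suc D, u}) ` W))"
      by (simp add: card_insert_le_m1 card_insert_if)
    also have "\<dots> \<le> Suc (card W)" using card_image_le[of W] by (simp add: W_def)
    also have "\<dots> = Suc k" by (simp add: W_def)
    finally have cI: "card (insert {0, u} ((\<lambda>w. {w + Suc D, u}) ` W)) \<le> Suc k" .
    have "card {e \<in> edges (Gr N D k). u \<in> e} \<le> Suc k"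
    proof -
      have "finite (insert {0, u} ((\<lambda>w. {w + Suc D, u}) ` W))" by (simp add: W_def)
      from card_mono[OF this sub] show ?thesis using cI by linarith
    qed
    then show ?thesis using kD by (simp add: degree_def)
  next
    case r
    have "{e \<in> edges (Gr N D k). u \<in> e} \<subseteq> {{u, hubof D k u}}"
    proof
      fix e assume e: "e \<in> {e \<in> edges (Gr N D k). u \<in> e}"
      then have "e \<in> E1 \<union> E2" "u \<in> e" by (auto simp: edges_eq)
      then show "e \<in> {{u, hubof D k u}}"
      proof (elim UnE)
        assume "e \<in> E1" then show ?thesis using \<open>u \<in> e\<close> r by (auto simp: E1_def)
      next
        assume "e \<in> E2" then obtain v where v: "D < v" "v < N" "e = {v, hubof D k v}" unfolding E2_def by auto
        have "hubof D k v \<le> D" using hub_D v by simp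
        then have "v = u" using v \<open>u \<in> e\<close> r by auto
        then show ?thesis using v by simp
      qed
    qed
    then have "card {e \<in> edges (Gr N D k). u \<in> e} \<le> 1" by (metis card.empty card_mono card_insert_if finite.emptyI finite.insertI empty_iff le_numeral_extra(4) One_nat_def)
    then show ?thesis using kD k1 by (simp add: degree_def)
  qed
qed

lemma maxdeg: "max_degree (Gr N D k) = D"
  unfolding max_degree_def Gr_verts
proof (rule Max_eqI)
  show "finite (degree (Gr N D k) ` {..<N})" by simp
  show "y \<le> D" if "y \<in> degree (Gr N D k) ` {..<N}" for y using that deg_le by auto
  show "D \<in> degree (Gr N D k) ` {..<N}" using deg0 DN by (intro rev_image_eqI[of 0]) auto
qed

end

context grp
begin

lemma exa: "ex_arrow t (Gr N D k)"
proof (cases "t = 0")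
  case True
  have "arrows (FF 1 0 0 0) (matching t) (Gr N D k)"
    unfolding arrows_def True using copy_matching0 by blast
  then show ?thesis unfolding ex_arrow_def using FF_wf by blast
next
  case False
  then have "arrows (FF t (D - mh N D k) (t - 1 + mh N D k) k) (matching t) (Gr N D k)"
    using FF_arrows[OF k1 mhD hub_le _ DN] by simp
  then show ?thesis unfolding ex_arrow_def using FF_wf by blast
qed

lemma rinf_bounds:
  shows "real D / real (N - 1) \<le> r_inf (Gr N D k)"
    and "r_inf (Gr N D k) \<le> (real D + real (mh N D k) + 2 * real k) / real (N - 1)"
proof -
  define G where "G = Gr N D k"
  define m where "m = mh N D k"
  define a where "a t = real (size_ramsey (matching t) G)" for t
  have sub: "a (s + t) \<le> a s + a t" for s t
    unfolding a_def G_def using sr_subadd[OF exa exa, of s t] by (simp add: of_nat_add[symmetric] del: of_nat_add)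
  have nn: "a t \<ge> 0" for t by (simp add: a_def)
  define Lm where "Lm = (INF t\<in>{1..}. a t / real t)"
  have fek: "(\<lambda>t. a t / real t) \<longlonglongrightarrow> Lm" unfolding Lm_def by (rule fekete[OF sub nn])
  have N2: "N \<ge> 2" using kD k1 DN by linarith
  define E where "E = real (N - 1)"
  have E0: "E > 0" using N2 by (simp add: E_def)
  have seq: "(\<lambda>t. real (size_ramsey (matching t) G) / (real t * real (card (edges G)))) = (\<lambda>t. (a t / real t) / E)"
    by (simp add: a_def E_def G_def card_edges)
  have "(\<lambda>t. (a t / real t) / E) \<longlonglongrightarrow> Lm / E" by (intro tendsto_divide fek tendsto_const) (use E0 in simp)
  then have rinf: "r_inf G = Lm / E" unfolding r_inf_def seq by (rule limI)
  have bdd: "bdd_below ((\<lambda>t. a t / real t) ` {1..})"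
    by (rule bdd_belowI[where m=0]) (auto intro: divide_nonneg_nonneg nn)
  have low: "real D \<le> a t / real t" if "t \<ge> 1" for t
  proof -
    obtain F where F: "wf_graph F" "arrows F (matching t) G" "card (edges F) = size_ramsey (matching t) G"
      using sr_witness[OF exa[of t]] unfolding G_def by blast
    have "t * degree G 0 \<le> card (edges F)"
      by (rule arrows_lb[OF F(1) _ _ F(2)]) (use wf DN in \<open>auto simp: G_def Gr_verts\<close>)
    then have "t * D \<le> size_ramsey (matching t) G" using F(3) deg0 by (simp add: G_def)
    then have "real t * real D \<le> a t" unfolding a_def by (metis of_nat_le_iff of_nat_mult)
    then show ?thesis using that by (simp add: field_simps)
  qed
  have "real D \<le> Lm" unfolding Lm_def by (rule cINF_greatest) (use low in auto)
  then show "real D / real (N - 1) \<le> r_inf (Gr N D k)"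
    using rinf E0 by (simp add: G_def E_def divide_right_mono)
  have "Lm \<le> a k / real k" unfolding Lm_def using bdd k1 by (intro cINF_lower) auto
  also have "a k \<le> real (k * (D - m) + k * (k - 1 + m) + (k - 1 + m) * k)"
  proof -
    have arr: "arrows (FF k (D - m) (k - 1 + m) k) (matching k) G"
      unfolding G_def m_def using FF_arrows[OF k1 mhD hub_le k1 DN] by simp
    have "size_ramsey (matching k) G \<le> card (edges (FF k (D - m) (k - 1 + m) k))"
      by (rule sr_le[OF FF_wf arr])
    also have "\<dots> \<le> k * (D - m) + k * (k - 1 + m) + (k - 1 + m) * k" by (rule FF_card)
    finally show ?thesis unfolding a_def by (simp only: of_nat_le_iff)
  qed
  then have "a k / real k \<le> real (k * (D - m) + k * (k - 1 + m) + (k - 1 + m) * k) / real k"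
    using k1 by (simp add: divide_right_mono)
  also have "\<dots> = real (D - m) + 2 * real (k - 1 + m)"
    using k1 by (simp add: field_simps)
  also have "\<dots> \<le> real D + real m + 2 * real k"
    using mhD k1 unfolding m_def by (simp add: of_nat_diff)
  finally have "Lm \<le> real D + real m + 2 * real k" .
  then show "r_inf (Gr N D k) \<le> (real D + real (mh N D k) + 2 * real k) / real (N - 1)"
    using rinf E0 by (simp add: G_def E_def m_def divide_right_mono)
qed

end

lemma sq_facts:
  assumes "N \<ge> 1"
  shows "real (nat \<lfloor>sqrt (real N)\<rfloor>) \<le> sqrt (real N)"
    "sqrt (real N) < real (nat \<lfloor>sqrt (real N)\<rfloor>) + 1"
    "sqrt (real N) * sqrt (real N) = real N"
proof -
  have s0: "sqrt (real N) \<ge> 0" by simp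
  show "real (nat \<lfloor>sqrt (real N)\<rfloor>) \<le> sqrt (real N)" using s0 by linarith
  show "sqrt (real N) < real (nat \<lfloor>sqrt (real N)\<rfloor>) + 1" using s0 by linarith
  show "sqrt (real N) * sqrt (real N) = real N" by simp
qed

lemma divb:
  fixes s X c :: real
  assumes s: "s \<ge> 2" and X: "0 \<le> X" "X \<le> c * s"
  shows "X / (s * s - 1) \<le> 2 * c / s"
proof -
  have ss: "s * s \<ge> 4" using s mult_mono[OF s s] by simp
  have pos: "0 < s * s / 2" using ss by simp
  have le: "s * s / 2 \<le> s * s - 1" using ss by simp
  have "X / (s * s - 1) \<le> X / (s * s / 2)" using X(1) le pos by (intro divide_left_mono) auto
  also have "\<dots> = 2 * X / (s * s)" by simp
  also have "\<dots> \<le> 2 * (c * s) / (s * s)" using X(2) ss by (intro divide_right_mono) auto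
  also have "\<dots> = 2 * c / s" using s by (simp add: field_simps)
  finally show ?thesis .
qed

lemma mh_bound:
  fixes s :: real
  assumes k: "1 \<le> k" and ks: "real k \<ge> s / 2" and ss: "s * s = real N" and s: "s > 0"
  shows "real (mh N D k) \<le> 1 + 2 * s"
proof -
  have "real ((N - Suc (Suc D)) div k) \<le> real (N - Suc (Suc D)) / real k" by (rule of_nat_div_le_of_nat)
  also have "\<dots> \<le> real N / real k" using k by (intro divide_right_mono) auto
  also have "\<dots> \<le> real N / (s / 2)" using ks s by (intro divide_left_mono) auto
  also have "\<dots> = 2 * s" using ss s by (simp add: field_simps)
  finally show ?thesis by (simp add: mh_def)
qed

lemma case_zero:
  assumes N: "N \<ge> 16"
  defines "k \<equiv> nat \<lfloor>sqrt (real N)\<rfloor>"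
  shows "grp N (k + 2) k"
    and "\<bar>r_inf (Gr N (k + 2) k)\<bar> \<le> 10 / sqrt (real N)"
    and "real (max_degree (Gr N (k + 2) k)) \<le> 2 * sqrt (real N) + 2"
    and "card (edges (Gr N (k + 2) k)) \<le> 2 * N"
proof -
  define s where "s = sqrt (real N)"
  have f: "real k \<le> s" "s < real k + 1" "s * s = real N" using sq_facts[of N] N by (auto simp: k_def s_def)
  have s4: "s \<ge> 4" unfolding s_def using N real_sqrt_le_mono[of 16 "real N"] by simp
  have k1: "1 \<le> k" using f s4 by linarith
  have DN: "k + 2 < N"
  proof -
    have "s * s \<ge> 4 * s" using s4 by (intro mult_right_mono) auto
    then have "real k + 2 < real N" using f s4 by linarith
    then show ?thesis by linarith
  qed
  have Nk: "N < (k + 1) * (k + 1)"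
  proof -
    have "s * s < (real k + 1) * (real k + 1)" using f(2) s4 by (intro mult_strict_mono) auto
    then have "real N < real ((k + 1) * (k + 1))" using f(3) by (simp add: algebra_simps)
    then show ?thesis by (simp only: of_nat_less_iff)
  qed
  have mh: "mh N (k + 2) k \<le> k + 2"
  proof -
    have "N - Suc (Suc (k + 2)) < (k + 1) * k" using Nk k1 by (simp add: algebra_simps)
    then have "(N - Suc (Suc (k + 2))) div k < k + 1" using k1 by (simp add: div_less_iff_less_mult)
    then show ?thesis by (simp add: mh_def)
  qed
  show g: "grp N (k + 2) k" by unfold_locales (use k1 DN mh in auto)
  interpret grp N "k + 2" k by (rule g)
  have Nm1: "real (N - 1) = s * s - 1" using f(3) N by (simp add: of_nat_diff)
  have "0 \<le> real (k + 2) / real (N - 1)" by simp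
  then have r0: "0 \<le> r_inf (Gr N (k + 2) k)" using rinf_bounds(1) by (rule order_trans)
  have X: "real (k + 2) + real (mh N (k + 2) k) + 2 * real k \<le> 5 * s"
  proof -
    have "real (mh N (k + 2) k) \<le> real k + 2" using mh by (metis of_nat_add of_nat_le_iff of_nat_numeral)
    then show ?thesis using f s4 by simp
  qed
  have "r_inf (Gr N (k + 2) k) \<le> (real (k + 2) + real (mh N (k + 2) k) + 2 * real k) / (s * s - 1)"
    using rinf_bounds(2) Nm1 by simp
  also have "\<dots> \<le> 2 * 5 / s" by (rule divb) (use s4 X in auto)
  finally show "\<bar>r_inf (Gr N (k + 2) k)\<bar> \<le> 10 / sqrt (real N)" using r0 by (simp add: s_def)
  show "real (max_degree (Gr N (k + 2) k)) \<le> 2 * sqrt (real N) + 2"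
    using maxdeg f s4 by (simp add: s_def[symmetric])
  show "card (edges (Gr N (k + 2) k)) \<le> 2 * N" using card_edges by simp
qed


lemma case_pos:
  fixes \<alpha> :: real
  assumes a0: "0 < \<alpha>" and a1: "\<alpha> \<le> 1" and N: "N \<ge> nat \<lceil>16 / \<alpha>\<^sup>2\<rceil> + 16"
  defines "k \<equiv> nat \<lfloor>sqrt (real N)\<rfloor>"
  defines "D \<equiv> min (N - 1) (nat \<lceil>\<alpha> * real N\<rceil>)"
  shows "grp N D k"
    and "\<bar>r_inf (Gr N D k) - \<alpha>\<bar> \<le> 10 / sqrt (real N)"
    and "\<bar>real (max_degree (Gr N D k)) - \<alpha> * real N\<bar> \<le> 10"
    and "\<bar>real (card (edges (Gr N D k))) - real N\<bar> \<le> 10"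
proof -
  define s where "s = sqrt (real N)"
  have N16: "N \<ge> 16" using N by simp
  have f: "real k \<le> s" "s < real k + 1" "s * s = real N" using sq_facts[of N] N16 by (auto simp: k_def s_def)
  have s4: "s \<ge> 4" unfolding s_def using N16 real_sqrt_le_mono[of 16 "real N"] by simp
  have Na: "real N \<ge> 16 / \<alpha>\<^sup>2" using N by linarith
  have sa: "s \<ge> 4 / \<alpha>"
  proof -
    have "sqrt (16 / \<alpha>\<^sup>2) = 4 / \<alpha>" using a0 by (simp add: real_sqrt_divide)
    then show ?thesis unfolding s_def using real_sqrt_le_mono[OF Na] by simp
  qed
  have aN: "\<alpha> * real N \<ge> 4 * s"
  proof -
    have "\<alpha> * s \<ge> 4" using sa a0 by (simp add: field_simps)
    then have "\<alpha> * s * s \<ge> 4 * s" using s4 by (intro mult_right_mono) auto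
    then show ?thesis using f(3) by (simp add: mult.assoc)
  qed
  have k1: "1 \<le> k" using f s4 by linarith
  have ks: "real k \<ge> s / 2" using f s4 by linarith
  have cnat: "real (nat \<lceil>\<alpha> * real N\<rceil>) = real_of_int \<lceil>\<alpha> * real N\<rceil>"
  proof (intro of_nat_nat)
    have "0 \<le> \<alpha> * real N" using a0 by simp
    then show "0 \<le> \<lceil>\<alpha> * real N\<rceil>" by simp
  qed
  have cc: "real (nat \<lceil>\<alpha> * real N\<rceil>) < \<alpha> * real N + 1" "\<alpha> * real N \<le> real (nat \<lceil>\<alpha> * real N\<rceil>)"
    using ceiling_correct[of "\<alpha> * real N"] unfolding cnat by linarith+
  have Dup: "real D \<le> \<alpha> * real N + 1"
  proof -
    have "real D \<le> real (nat \<lceil>\<alpha> * real N\<rceil>)" unfolding D_def by simp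
    also have "\<dots> \<le> \<alpha> * real N + 1" using cc by linarith
    finally show ?thesis .
  qed
  have Dlow: "real D \<ge> \<alpha> * real N - 1"
  proof -
    have "real (N - 1) \<ge> \<alpha> * real N - 1" using N16 a1 by (simp add: of_nat_diff mult_left_le_one_le)
    moreover have "real (nat \<lceil>\<alpha> * real N\<rceil>) \<ge> \<alpha> * real N - 1" using cc by linarith
    ultimately show ?thesis unfolding D_def by (simp add: min_def)
  qed
  have D3: "real D \<ge> 3 * s"
  proof -
    have "real (N - 1) \<ge> 3 * s" using N16 f(3) s4 mult_right_mono[of 4 s s] by (simp add: of_nat_diff)
    moreover have "real (nat \<lceil>\<alpha> * real N\<rceil>) \<ge> 3 * s" using aN s4 cc by linarith
    ultimately show ?thesis unfolding D_def by (simp add: min_def)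
  qed
  have mhb: "real (mh N D k) \<le> 1 + 2 * s" by (rule mh_bound[OF k1 ks f(3)]) (use s4 in simp)
  have "real (k + 1) \<le> real D" using D3 f s4 by simp
  then have kD: "k + 1 \<le> D" by (simp only: of_nat_le_iff)
  have DN: "D < N" using N16 unfolding D_def by simp
  have "real (mh N D k) \<le> real D" using D3 mhb s4 by simp
  then have mhD: "mh N D k \<le> D" by (simp only: of_nat_le_iff)
  show g: "grp N D k" by unfold_locales (use k1 kD DN mhD in auto)
  interpret grp N D k by (rule g)
  have Nm1: "real (N - 1) = s * s - 1" using f(3) N16 by (simp add: of_nat_diff)
  have Np: "s * s - 1 > 0" using s4 mult_mono[of 4 s 4 s] by simp
  have lowr: "\<alpha> - r_inf (Gr N D k) \<le> 2 / s"
  proof -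
    have "\<alpha> - r_inf (Gr N D k) \<le> \<alpha> - real D / (s * s - 1)" using rinf_bounds(1) Nm1 by simp
    also have "\<dots> = (\<alpha> * (s * s - 1) - real D) / (s * s - 1)" using Np by (simp add: field_simps)
    also have "\<dots> \<le> max 0 (\<alpha> * (s * s - 1) - real D) / (s * s - 1)" using Np by (intro divide_right_mono) auto
    also have "\<dots> \<le> 2 * 1 / s"
    proof (rule divb)
      show "max 0 (\<alpha> * (s * s - 1) - real D) \<le> 1 * s" using Dlow f(3) s4 a0 by (auto simp: algebra_simps)
    qed (use s4 in auto)
    finally show ?thesis by simp
  qed
  have upr: "r_inf (Gr N D k) - \<alpha> \<le> 10 / s"
  proof -
    have "r_inf (Gr N D k) - \<alpha> \<le> (real D + real (mh N D k) + 2 * real k) / (s * s - 1) - \<alpha>"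
      using rinf_bounds(2) Nm1 by simp
    also have "\<dots> = (real D + real (mh N D k) + 2 * real k - \<alpha> * (s * s - 1)) / (s * s - 1)"
      using Np by (simp add: field_simps)
    also have "\<dots> \<le> max 0 (real D + real (mh N D k) + 2 * real k - \<alpha> * (s * s - 1)) / (s * s - 1)"
      using Np by (intro divide_right_mono) auto
    also have "\<dots> \<le> 2 * 5 / s"
    proof (rule divb)
      show "max 0 (real D + real (mh N D k) + 2 * real k - \<alpha> * (s * s - 1)) \<le> 5 * s"
        using Dup mhb f s4 a1 by (auto simp: algebra_simps)
    qed (use s4 in auto)
    finally show ?thesis by simp
  qed
  show "\<bar>r_inf (Gr N D k) - \<alpha>\<bar> \<le> 10 / sqrt (real N)"
    using lowr upr s4 unfolding s_def[symmetric] by (simp add: abs_le_iff)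
  show "\<bar>real (max_degree (Gr N D k)) - \<alpha> * real N\<bar> \<le> 10" using maxdeg Dup Dlow by simp
  show "\<bar>real (card (edges (Gr N D k))) - real N\<bar> \<le> 10" using card_edges N16 by (simp add: of_nat_diff)
qed


lemma lim10: "(\<lambda>N. 10 / sqrt (real N)) \<longlonglongrightarrow> 0"
  by real_asymp

theorem theorem3p4:
  fixes \<alpha> :: real
  assumes "0 \<le> \<alpha>" "\<alpha> \<le> 1"
  shows "\<exists>(N0::nat) (G :: nat \<Rightarrow> graph).
     (\<forall>N\<ge>N0. wf_graph (G N) \<and> connected_graph (G N) \<and> bipartite (G N)
                \<and> card (verts (G N)) = N)
   \<and> ((\<lambda>N. r_inf (G N)) \<longlonglongrightarrow> \<alpha>)
   \<and> (0 < \<alpha> \<longrightarrow> (\<exists>C::real. \<forall>N\<ge>N0.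
          \<bar>real (card (edges (G N))) - real N\<bar> \<le> C
        \<and> \<bar>real (max_degree (G N)) - \<alpha> * real N\<bar> \<le> C
        \<and> \<bar>r_inf (G N) - \<alpha>\<bar> \<le> C / sqrt (real N)))
   \<and> (\<alpha> = 0 \<longrightarrow> (\<exists>C::real. \<forall>N\<ge>N0.
          card (edges (G N)) \<le> 2 * N
        \<and> real (max_degree (G N)) \<le> 2 * sqrt (real N) + 2
        \<and> \<bar>r_inf (G N)\<bar> \<le> C / sqrt (real N)))"
proof (cases "\<alpha> = 0")
  case True
  define kf where "kf N = nat \<lfloor>sqrt (real N)\<rfloor>" for N :: nat
  define G where "G N = Gr N (kf N + 2) (kf N)" for N
  have gr: "grp N (kf N + 2) (kf N)" if "N \<ge> 16" for N
    using case_zero(1)[OF that] by (simp add: kf_def)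
  have P1: "\<forall>N\<ge>16. wf_graph (G N) \<and> connected_graph (G N) \<and> bipartite (G N) \<and> card (verts (G N)) = N"
    using grp.wf[OF gr] grp.conn[OF gr] grp.bip[OF gr] grp.card_verts[OF gr] by (simp add: G_def)
  have bnd: "\<bar>r_inf (G N)\<bar> \<le> 10 / sqrt (real N)" if "N \<ge> 16" for N
    using case_zero(2)[OF that] by (simp add: G_def kf_def)
  have P2: "(\<lambda>N. r_inf (G N)) \<longlonglongrightarrow> \<alpha>"
  proof (rule tendsto_sandwich[of "\<lambda>N. - (10 / sqrt (real N))" _ _ "\<lambda>N. 10 / sqrt (real N)"])
    show "\<forall>\<^sub>F N in sequentially. - (10 / sqrt (real N)) \<le> r_inf (G N)"
      using bnd by (intro eventually_sequentiallyI[of 16]) (simp add: abs_le_iff, fastforce)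
    show "\<forall>\<^sub>F N in sequentially. r_inf (G N) \<le> 10 / sqrt (real N)"
      using bnd by (intro eventually_sequentiallyI[of 16]) (simp add: abs_le_iff)
    show "(\<lambda>N. - (10 / sqrt (real N))) \<longlonglongrightarrow> \<alpha>" using tendsto_minus[OF lim10] True by simp
    show "(\<lambda>N. 10 / sqrt (real N)) \<longlonglongrightarrow> \<alpha>" using lim10 True by simp
  qed
  have P4: "\<forall>N\<ge>16. card (edges (G N)) \<le> 2 * N \<and> real (max_degree (G N)) \<le> 2 * sqrt (real N) + 2
        \<and> \<bar>r_inf (G N)\<bar> \<le> 10 / sqrt (real N)"
    using case_zero(3,4) bnd by (simp add: G_def kf_def)
  show ?thesis using P1 P2 P4 True by (intro exI[of _ 16] exI[of _ G]) auto
next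
  case False
  then have a0: "0 < \<alpha>" using assms(1) by simp
  define N0 where "N0 = nat \<lceil>16 / \<alpha>\<^sup>2\<rceil> + 16"
  define kf where "kf N = nat \<lfloor>sqrt (real N)\<rfloor>" for N :: nat
  define Df where "Df N = min (N - 1) (nat \<lceil>\<alpha> * real N\<rceil>)" for N :: nat
  define G where "G N = Gr N (Df N) (kf N)" for N
  note cp = case_pos[OF a0 assms(2), folded N0_def]
  have gr: "grp N (Df N) (kf N)" if "N \<ge> N0" for N
    using cp(1)[OF that] by (simp add: kf_def Df_def)
  have P1: "\<forall>N\<ge>N0. wf_graph (G N) \<and> connected_graph (G N) \<and> bipartite (G N) \<and> card (verts (G N)) = N"
    using grp.wf[OF gr] grp.conn[OF gr] grp.bip[OF gr] grp.card_verts[OF gr] by (simp add: G_def)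
  have bnd: "\<bar>r_inf (G N) - \<alpha>\<bar> \<le> 10 / sqrt (real N)" if "N \<ge> N0" for N
    using cp(2)[OF that] by (simp add: G_def kf_def Df_def)
  have P2: "(\<lambda>N. r_inf (G N)) \<longlonglongrightarrow> \<alpha>"
  proof (rule tendsto_sandwich[of "\<lambda>N. \<alpha> - 10 / sqrt (real N)" _ _ "\<lambda>N. \<alpha> + 10 / sqrt (real N)"])
    show "\<forall>\<^sub>F N in sequentially. \<alpha> - 10 / sqrt (real N) \<le> r_inf (G N)"
      using bnd by (intro eventually_sequentiallyI[of N0]) (simp add: abs_le_iff, fastforce)
    show "\<forall>\<^sub>F N in sequentially. r_inf (G N) \<le> \<alpha> + 10 / sqrt (real N)"
    proof (rule eventually_sequentiallyI[of N0])
      fix N assume "N0 \<le> N"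
      from bnd[OF this] show "r_inf (G N) \<le> \<alpha> + 10 / sqrt (real N)" by (simp add: abs_le_iff)
    qed
    show "(\<lambda>N. \<alpha> - 10 / sqrt (real N)) \<longlonglongrightarrow> \<alpha>" using tendsto_diff[OF tendsto_const lim10, of \<alpha>] by simp
    show "(\<lambda>N. \<alpha> + 10 / sqrt (real N)) \<longlonglongrightarrow> \<alpha>" using tendsto_add[OF tendsto_const lim10, of \<alpha>] by simp
  qed
  have P3: "\<forall>N\<ge>N0. \<bar>real (card (edges (G N))) - real N\<bar> \<le> 10
        \<and> \<bar>real (max_degree (G N)) - \<alpha> * real N\<bar> \<le> 10
        \<and> \<bar>r_inf (G N) - \<alpha>\<bar> \<le> 10 / sqrt (real N)"
    using cp(3,4) bnd by (simp add: G_def kf_def Df_def)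
  show ?thesis using P1 P2 P3 False by (intro exI[of _ N0] exI[of _ G]) auto
qed

end
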